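(* Let $(\Phi,D)$ be a domain-free information algebra whose lattice $D$ has a top element. Then $(\Phi,D)$ is continuous (resp. s-continuous) if and only if there exists a set $\Upsilon\subseteq\Phi$ containing the empty information $e$ such that: (convergency) every directed subset $X\subseteq\Upsilon$ has a supremum $\vee X$; and (D2) for every $\phi\in\Phi$, the set $\{\psi\in\Upsilon:\psi\ll\phi\}$ is directed and $\phi=\vee\{\psi\in\Upsilon:\psi\ll\phi\}$ (resp. (SD2) for every $\phi\in\Phi$ and $x\in D$, the set $\{\psi\in\Upsilon:\psi=\psi^{\Rightarrow x}\ll\phi\}$ is directed and $\phi^{\Rightarrow x}=\vee\{\psi\in\Upsilon:\psi=\psi^{\Rightarrow x}\ll\phi\}$).
   Context: A domain-free information algebra $(\Phi,D)$ consists of a set $\Phi$, a lattice $D$, a combination $\otimes:\Phi\times\Phi\to\Phi$ and a focusing $\Phi\times D\to\Phi$, $(\psi,x)\mapsto\psi^{\Rightarrow x}$, such that: (1) $\otimes$ is associative and commutative and has a neutral element $e$ (the empty information); (2) $(\psi^{\Rightarrow y})^{\Rightarrow x}=\psi^{\Rightarrow x\wedge y}$; (3) $(\phi^{\Rightarrow x}\otimes\psi)^{\Rightarrow x}=\phi^{\Rightarrow x}\otimes\psi^{\Rightarrow x}$; (4) for every $\psi$ there is $x\in D$ with $\psi^{\Rightarrow x}=\psi$; (5) $\psi\otimes\psi^{\Rightarrow x}=\psi$. $\Phi$ is partially ordered by $\psi\le\phi$ iff $\psi\otimes\phi=\phi$; suprema $\vee$ are with respect to this order. $a\ll b$ ($a$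 way-below $b$) means: for every directed set $X$ with $b\le\vee X$ there is $c\in X$ with $a\le c$. $(\Phi,D)$ (with $D$ having a top element) is called continuous (resp. s-continuous) if there exists a basis $\Gamma\subseteq\Phi$, closed under combination and containing $e$, such that every directed $X\subseteq\Gamma$ has a supremum in $\Phi$, and $\phi=\vee\{\psi\in\Gamma:\psi\ll\phi\}$ for all $\phi\in\Phi$ (resp. $\phi^{\Rightarrow x}=\vee\{\psi\in\Gamma:\psi=\psi^{\Rightarrow x}\ll\phi\}$ for all $\phi\in\Phi$, $x\in D$). *)

theory Defs
  imports Main
begin

text \<open>A domain-free information algebra: information elements of type 'a (the set Phi is the
whole type), the lattice D is the type 'd; combination comb, focusing foc, neutral element e.\<close>

definition info_algebra ::
  "('a \<Rightarrow> 'a \<Rightarrow> 'a) \<Rightarrow> ('a \<Rightarrow> 'd::lattice \<Rightarrow> 'a) \<Rightarrow> 'a \<Rightarrow> bool" where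
  "info_algebra comb foc e \<longleftrightarrow>
     (\<forall>a b c. comb (comb a b) c = comb a (comb b c)) \<and>
     (\<forall>a b. comb a b = comb b a) \<and>
     (\<forall>a. comb a e = a) \<and>
     (\<forall>psi x y. foc (foc psi y) x = foc psi (inf x y)) \<and>
     (\<forall>phi psi x. foc (comb (foc phi x) psi) x = comb (foc phi x) (foc psi x)) \<and>
     (\<forall>psi. \<exists>x. foc psi x = psi) \<and>
     (\<forall>psi x. comb psi (foc psi x) = psi)"

definition info_le :: "('a \<Rightarrow> 'a \<Rightarrow> 'a) \<Rightarrow> 'a \<Rightarrow> 'a \<Rightarrow> bool" where
  "info_le comb psi phi \<longleftrightarrow> comb psi phi = phi"

definition info_lub :: "('a \<Rightarrow> 'a \<Rightarrow> 'a) \<Rightarrow> 'a set \<Rightarrow> 'a \<Rightarrow> bool" where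
  "info_lub comb X s \<longleftrightarrow>
     (\<forall>a\<in>X. info_le comb a s) \<and> (\<forall>u. (\<forall>a\<in>X. info_le comb a u) \<longrightarrow> info_le comb s u)"

definition info_directed :: "('a \<Rightarrow> 'a \<Rightarrow> 'a) \<Rightarrow> 'a set \<Rightarrow> bool" where
  "info_directed comb X \<longleftrightarrow> X \<noteq> {} \<and>
     (\<forall>a\<in>X. \<forall>b\<in>X. \<exists>c\<in>X. info_le comb a c \<and> info_le comb b c)"

definition way_below :: "('a \<Rightarrow> 'a \<Rightarrow> 'a) \<Rightarrow> 'a \<Rightarrow> 'a \<Rightarrow> bool" where
  "way_below comb a b \<longleftrightarrow>
     (\<forall>X s. info_directed comb X \<and> info_lub comb X s \<and> info_le comb b s \<longrightarrow>
        (\<exists>c\<in>X. info_le comb a c))"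

definition continuous_ia ::
  "('a \<Rightarrow> 'a \<Rightarrow> 'a) \<Rightarrow> ('a \<Rightarrow> 'd::{lattice,order_top} \<Rightarrow> 'a) \<Rightarrow> 'a \<Rightarrow> bool" where
  "continuous_ia comb foc e \<longleftrightarrow>
     (\<exists>G. e \<in> G \<and> (\<forall>a\<in>G. \<forall>b\<in>G. comb a b \<in> G) \<and>
        (\<forall>X. X \<subseteq> G \<and> info_directed comb X \<longrightarrow> (\<exists>s. info_lub comb X s)) \<and>
        (\<forall>phi. info_lub comb {psi \<in> G. way_below comb psi phi} phi))"

definition s_continuous_ia ::
  "('a \<Rightarrow> 'a \<Rightarrow> 'a) \<Rightarrow> ('a \<Rightarrow> 'd::{lattice,order_top} \<Rightarrow> 'a) \<Rightarrow> 'a \<Rightarrow> bool" where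
  "s_continuous_ia comb foc e \<longleftrightarrow>
     (\<exists>G. e \<in> G \<and> (\<forall>a\<in>G. \<forall>b\<in>G. comb a b \<in> G) \<and>
        (\<forall>X. X \<subseteq> G \<and> info_directed comb X \<longrightarrow> (\<exists>s. info_lub comb X s)) \<and>
        (\<forall>phi x. info_lub comb {psi \<in> G. foc psi x = psi \<and> way_below comb psi phi} (foc phi x)))"

end

theory Submission
  imports Defs
begin

context
  fixes comb :: "'a \<Rightarrow> 'a \<Rightarrow> 'a" and foc :: "'a \<Rightarrow> 'd::{lattice,order_top} \<Rightarrow> 'a" and e :: 'a
  assumes A: "info_algebra comb foc e"
begin

lemma assoc: "comb (comb a b) c = comb a (comb b c)" using A unfolding info_algebra_def by blast
lemma commu: "comb a b = comb b a" using A unfolding info_algebra_def by blast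
lemma neut: "comb a e = a" using A unfolding info_algebra_def by blast
lemma foc2: "foc (foc psi y) x = foc psi (inf x y)" using A unfolding info_algebra_def by blast
lemma foc3: "foc (comb (foc phi x) psi) x = comb (foc phi x) (foc psi x)" using A unfolding info_algebra_def by blast
lemma foc4: "\<exists>x. foc psi x = psi" using A unfolding info_algebra_def by blast
lemma foc5: "comb psi (foc psi x) = psi" using A unfolding info_algebra_def by blast

lemma idem: "comb a a = a"
proof -
  obtain y where "foc a y = a" using foc4 by blast
  then show ?thesis using foc5[of a y] by simp
qed

lemma le_refl: "info_le comb a a" by (simp add: info_le_def idem)
lemma le_trans: "info_le comb a b \<Longrightarrow> info_le comb b c \<Longrightarrow> info_le comb a c"
  unfolding info_le_def by (metis assoc)
lemma le_antisym: "info_le comb a b \<Longrightarrow> info_le comb b a \<Longrightarrow> a = b"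
  unfolding info_le_def by (metis commu)
lemma e_le: "info_le comb e a" unfolding info_le_def by (metis commu neut)
lemma le_comb1: "info_le comb a (comb a b)" unfolding info_le_def by (metis assoc idem)
lemma le_comb2: "info_le comb b (comb a b)" using le_comb1 commu by metis
lemma comb_le: "info_le comb a c \<Longrightarrow> info_le comb b c \<Longrightarrow> info_le comb (comb a b) c"
  unfolding info_le_def by (metis assoc)

lemma lub_single: "info_lub comb {b} b" unfolding info_lub_def by (simp add: le_refl)
lemma dir_single: "info_directed comb {b}" unfolding info_directed_def by (simp add: le_refl)

lemma wb_le: "way_below comb a b \<Longrightarrow> info_le comb a b"
  unfolding way_below_def using lub_single dir_single le_refl by blast

lemma wb_mono: "way_below comb a b \<Longrightarrow> info_le comb b c \<Longrightarrow> way_below comb a c"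
  unfolding way_below_def by (meson le_trans)

lemma wb_e: "way_below comb e b"
  unfolding way_below_def info_directed_def using e_le by blast

lemma wb_comb: "way_below comb a p \<Longrightarrow> way_below comb b p \<Longrightarrow> way_below comb (comb a b) p"
  unfolding way_below_def
proof (intro allI impI)
  fix X s
  assume a: "\<forall>X s. info_directed comb X \<and> info_lub comb X s \<and> info_le comb p s \<longrightarrow> (\<exists>c\<in>X. info_le comb a c)"
    and b: "\<forall>X s. info_directed comb X \<and> info_lub comb X s \<and> info_le comb p s \<longrightarrow> (\<exists>c\<in>X. info_le comb b c)"
    and h: "info_directed comb X \<and> info_lub comb X s \<and> info_le comb p s"
  obtain c1 where c1: "c1 \<in> X" "info_le comb a c1" using a h by blast
  obtain c2 where c2: "c2 \<in> X" "info_le comb b c2" using b h by blast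
  obtain c3 where "c3 \<in> X" "info_le comb c1 c3" "info_le comb c2 c3"
    using h c1 c2 unfolding info_directed_def by blast
  then show "\<exists>c\<in>X. info_le comb (comb a b) c"
    using c1 c2 by (meson comb_le le_trans)
qed

lemma dir_wb:
  assumes "e \<in> G" "\<forall>a\<in>G. \<forall>b\<in>G. comb a b \<in> G"
  shows "info_directed comb {psi \<in> G. way_below comb psi phi}"
  unfolding info_directed_def using assms wb_e wb_comb le_comb1 le_comb2 by blast

lemma foc_e: "foc e x = e" using foc5[of e x] by (metis commu neut)

lemma foc_top: "foc phi top = phi"
proof -
  obtain y where "foc phi y = phi" using foc4 by blast
  moreover have "inf top y = y" by (rule inf_absorb2) simp
  ultimately show ?thesis using foc2[of phi y top] by simp
qed

lemma foc_comb_fix: "foc a x = a \<Longrightarrow> foc b x = b \<Longrightarrow> foc (comb a b) x = comb a b"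
  using foc3[of a x b] by simp

lemma foc_mono: "info_le comb psi phi \<Longrightarrow> info_le comb (foc psi x) (foc phi x)"
proof -
  assume h: "info_le comb psi phi"
  have "info_le comb (foc psi x) psi" unfolding info_le_def using foc5 commu by metis
  then have "comb (foc psi x) phi = phi" using h le_trans info_le_def by metis
  then have "foc (comb (foc psi x) phi) x = foc phi x" by simp
  then have "comb (foc psi x) (foc phi x) = foc phi x" by (rule trans[OF sym[OF foc3[of psi x phi]]])
  then show ?thesis unfolding info_le_def .
qed

lemma dir_wb_s:
  assumes "e \<in> G" "\<forall>a\<in>G. \<forall>b\<in>G. comb a b \<in> G"
  shows "info_directed comb {psi \<in> G. psi = foc psi x \<and> way_below comb psi phi}"
  unfolding info_directed_def
proof (intro conjI ballI)
  show "{psi \<in> G. psi = foc psi x \<and> way_below comb psi phi} \<noteq> {}"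
  proof -
    have "e \<in> {psi \<in> G. psi = foc psi x \<and> way_below comb psi phi}"
      using assms(1) foc_e[of x] wb_e[of phi] by simp
    then show ?thesis by (rule ex_in_conv[THEN iffD1, OF exI])
  qed
next
  fix a b assume ab: "a \<in> {psi \<in> G. psi = foc psi x \<and> way_below comb psi phi}"
    "b \<in> {psi \<in> G. psi = foc psi x \<and> way_below comb psi phi}"
  then show "\<exists>c\<in>{psi \<in> G. psi = foc psi x \<and> way_below comb psi phi}. info_le comb a c \<and> info_le comb b c"
  proof (intro bexI[of _ "comb a b"] conjI)
    have a: "a \<in> G" "foc a x = a" "way_below comb a phi" and b: "b \<in> G" "foc b x = b" "way_below comb b phi"
      using ab by auto
    show "info_le comb a (comb a b)" by (rule le_comb1)
    show "info_le comb b (comb a b)" by (rule le_comb2)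
    have "comb a b \<in> G" using assms(2) a(1) b(1) by blast
    moreover have "comb a b = foc (comb a b) x" using foc_comb_fix[OF a(2) b(2)] by simp
    moreover have "way_below comb (comb a b) phi" by (rule wb_comb[OF a(3) b(3)])
    ultimately show "comb a b \<in> {psi \<in> G. psi = foc psi x \<and> way_below comb psi phi}" by blast
  qed
qed

lemma all_dir_sup:
  assumes D: "\<forall>phi. info_directed comb {psi \<in> U. way_below comb psi phi} \<and>
                     info_lub comb {psi \<in> U. way_below comb psi phi} phi"
    and C: "\<forall>X. X \<subseteq> U \<and> info_directed comb X \<longrightarrow> (\<exists>s. info_lub comb X s)"
    and X: "info_directed comb X"
  shows "\<exists>s. info_lub comb X s"
proof -
  define W where "W = {psi \<in> U. \<exists>x\<in>X. way_below comb psi x}"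
  have Wd: "info_directed comb W"
    unfolding info_directed_def
  proof (intro conjI ballI)
    obtain x where "x \<in> X" using X unfolding info_directed_def by blast
    then show "W \<noteq> {}" using D unfolding W_def info_directed_def by blast
  next
    fix a b assume "a \<in> W" "b \<in> W"
    then obtain x1 x2 where a: "a \<in> U" "x1 \<in> X" "way_below comb a x1"
      and b: "b \<in> U" "x2 \<in> X" "way_below comb b x2" unfolding W_def by blast
    obtain x3 where x3: "x3 \<in> X" "info_le comb x1 x3" "info_le comb x2 x3"
      using X a b unfolding info_directed_def by blast
    have "a \<in> {psi \<in> U. way_below comb psi x3}" "b \<in> {psi \<in> U. way_below comb psi x3}"
      using a b x3 wb_mono by auto
    then obtain c where "c \<in> {psi \<in> U. way_below comb psi x3}" "info_le comb a c" "info_le comb b c"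
      using D unfolding info_directed_def by blast
    then show "\<exists>c\<in>W. info_le comb a c \<and> info_le comb b c" unfolding W_def using x3 by blast
  qed
  have "W \<subseteq> U" unfolding W_def by blast
  then have "\<exists>s. info_lub comb W s" using C Wd by blast
  then obtain s where s: "info_lub comb W s" by blast
  have "info_lub comb X s"
    unfolding info_lub_def
  proof (intro conjI ballI allI impI)
    fix x assume x: "x \<in> X"
    have "info_lub comb {psi \<in> U. way_below comb psi x} x" using spec[OF D, of x] by (rule conjunct2)
    moreover have "\<forall>a\<in>{psi \<in> U. way_below comb psi x}. info_le comb a s"
      using s x unfolding info_lub_def W_def by blast
    ultimately show "info_le comb x s" unfolding info_lub_def by blast
  next
    fix u assume u: "\<forall>a\<in>X. info_le comb a u"
    have "\<forall>w\<in>W. info_le comb w u"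
    proof
      fix w assume "w \<in> W"
      then obtain x where "x \<in> X" "way_below comb w x" unfolding W_def by blast
      then show "info_le comb w u" using u wb_le le_trans by blast
    qed
    then show "info_le comb s u" using s unfolding info_lub_def by blast
  qed
  then show ?thesis by blast
qed

end

theorem proposition3p6:
  fixes comb :: "'a \<Rightarrow> 'a \<Rightarrow> 'a" and foc :: "'a \<Rightarrow> 'd::{lattice,order_top} \<Rightarrow> 'a" and e :: 'a
  assumes "info_algebra comb foc e"
  shows "(continuous_ia comb foc e \<longleftrightarrow>
           (\<exists>U. e \<in> U \<and>
              (\<forall>X. X \<subseteq> U \<and> info_directed comb X \<longrightarrow> (\<exists>s. info_lub comb X s)) \<and>
              (\<forall>phi. info_directed comb {psi \<in> U. way_below comb psi phi} \<and>
                     info_lub comb {psi \<in> U. way_below comb psi phi} phi)))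
       \<and> (s_continuous_ia comb foc e \<longleftrightarrow>
           (\<exists>U. e \<in> U \<and>
              (\<forall>X. X \<subseteq> U \<and> info_directed comb X \<longrightarrow> (\<exists>s. info_lub comb X s)) \<and>
              (\<forall>phi x. info_directed comb {psi \<in> U. psi = foc psi x \<and> way_below comb psi phi} \<and>
                     info_lub comb {psi \<in> U. psi = foc psi x \<and> way_below comb psi phi} (foc phi x))))"
proof (intro conjI iffI)
  note A = assms
  assume "continuous_ia comb foc e"
  then obtain G where G: "e \<in> G" "\<forall>a\<in>G. \<forall>b\<in>G. comb a b \<in> G"
    "\<forall>X. X \<subseteq> G \<and> info_directed comb X \<longrightarrow> (\<exists>s. info_lub comb X s)"
    "\<forall>phi. info_lub comb {psi \<in> G. way_below comb psi phi} phi"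
    unfolding continuous_ia_def by blast
  show "\<exists>U. e \<in> U \<and>
              (\<forall>X. X \<subseteq> U \<and> info_directed comb X \<longrightarrow> (\<exists>s. info_lub comb X s)) \<and>
              (\<forall>phi. info_directed comb {psi \<in> U. way_below comb psi phi} \<and>
                     info_lub comb {psi \<in> U. way_below comb psi phi} phi)"
    apply (rule exI[of _ G])
    using G(1,3,4) dir_wb[OF A G(1,2)] by simp
next
  note A = assms
  assume "\<exists>U. e \<in> U \<and>
              (\<forall>X. X \<subseteq> U \<and> info_directed comb X \<longrightarrow> (\<exists>s. info_lub comb X s)) \<and>
              (\<forall>phi. info_directed comb {psi \<in> U. way_below comb psi phi} \<and>
                     info_lub comb {psi \<in> U. way_below comb psi phi} phi)"
  then obtain U where U: "e \<in> U" "\<forall>X. X \<subseteq> U \<and> info_directed comb X \<longrightarrow> (\<exists>s. info_lub comb X s)"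
    "\<forall>phi. info_directed comb {psi \<in> U. way_below comb psi phi} \<and>
                     info_lub comb {psi \<in> U. way_below comb psi phi} phi" by blast
  have "info_lub comb {psi \<in> UNIV. way_below comb psi phi} phi" for phi
    unfolding info_lub_def
  proof (intro conjI ballI allI impI)
    fix a assume "a \<in> {psi \<in> UNIV. way_below comb psi phi}"
    then show "info_le comb a phi" using wb_le[OF A] by blast
  next
    fix u assume "\<forall>a\<in>{psi \<in> UNIV. way_below comb psi phi}. info_le comb a u"
    then have "\<forall>a\<in>{psi \<in> U. way_below comb psi phi}. info_le comb a u" by auto
    then show "info_le comb phi u" using spec[OF U(3), of phi] unfolding info_lub_def by blast
  qed
  note L = this
  have S: "\<forall>X. X \<subseteq> UNIV \<and> info_directed comb X \<longrightarrow> (\<exists>s. info_lub comb X s)"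
    using all_dir_sup[OF A U(3) U(2)] by blast
  show "continuous_ia comb foc e" unfolding continuous_ia_def
    apply (rule exI[of _ UNIV])
    apply (intro conjI)
       apply simp
      apply simp
     apply (rule S)
    apply (intro allI)
    by (rule L)
next
  note A = assms
  assume "s_continuous_ia comb foc e"
  then obtain G where G: "e \<in> G" "\<forall>a\<in>G. \<forall>b\<in>G. comb a b \<in> G"
    "\<forall>X. X \<subseteq> G \<and> info_directed comb X \<longrightarrow> (\<exists>s. info_lub comb X s)"
    "\<forall>phi x. info_lub comb {psi \<in> G. foc psi x = psi \<and> way_below comb psi phi} (foc phi x)"
    unfolding s_continuous_ia_def by blast
  have eq: "{psi \<in> G. foc psi x = psi \<and> way_below comb psi phi} = {psi \<in> G. psi = foc psi x \<and> way_below comb psi phi}" for x phi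
    by auto
  show "\<exists>U. e \<in> U \<and>
              (\<forall>X. X \<subseteq> U \<and> info_directed comb X \<longrightarrow> (\<exists>s. info_lub comb X s)) \<and>
              (\<forall>phi x. info_directed comb {psi \<in> U. psi = foc psi x \<and> way_below comb psi phi} \<and>
                     info_lub comb {psi \<in> U. psi = foc psi x \<and> way_below comb psi phi} (foc phi x))"
    apply (rule exI[of _ G])
    using G(1,3,4) dir_wb_s[OF A G(1,2)] eq by simp
next
  note A = assms
  assume "\<exists>U. e \<in> U \<and>
              (\<forall>X. X \<subseteq> U \<and> info_directed comb X \<longrightarrow> (\<exists>s. info_lub comb X s)) \<and>
              (\<forall>phi x. info_directed comb {psi \<in> U. psi = foc psi x \<and> way_below comb psi phi} \<and>
                     info_lub comb {psi \<in> U. psi = foc psi x \<and> way_below comb psi phi} (foc phi x))"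
  then obtain U where U: "e \<in> U" "\<forall>X. X \<subseteq> U \<and> info_directed comb X \<longrightarrow> (\<exists>s. info_lub comb X s)"
    "\<forall>phi x. info_directed comb {psi \<in> U. psi = foc psi x \<and> way_below comb psi phi} \<and>
                     info_lub comb {psi \<in> U. psi = foc psi x \<and> way_below comb psi phi} (foc phi x)" by blast
  have eqt: "{psi \<in> U. psi = foc psi top \<and> way_below comb psi phi} = {psi \<in> U. way_below comb psi phi}" for phi
    using foc_top[OF A] by auto
  have D: "\<forall>phi. info_directed comb {psi \<in> U. way_below comb psi phi} \<and>
                     info_lub comb {psi \<in> U. way_below comb psi phi} phi"
  proof
    fix phi
    show "info_directed comb {psi \<in> U. way_below comb psi phi} \<and>
                     info_lub comb {psi \<in> U. way_below comb psi phi} phi"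
      using spec[OF spec[OF U(3), of phi], of top] by (simp add: foc_top[OF A])
  qed
  have "info_lub comb {psi \<in> UNIV. foc psi x = psi \<and> way_below comb psi phi} (foc phi x)" for phi x
    unfolding info_lub_def
  proof (intro conjI ballI allI impI)
    fix a assume "a \<in> {psi \<in> UNIV. foc psi x = psi \<and> way_below comb psi phi}"
    then have "foc a x = a" "info_le comb a phi" using wb_le[OF A] by auto
    then show "info_le comb a (foc phi x)" using foc_mono[OF A, of a phi x] by simp
  next
    fix u assume "\<forall>a\<in>{psi \<in> UNIV. foc psi x = psi \<and> way_below comb psi phi}. info_le comb a u"
    then have "\<forall>a\<in>{psi \<in> U. psi = foc psi x \<and> way_below comb psi phi}. info_le comb a u" by auto
    then show "info_le comb (foc phi x) u" using spec[OF spec[OF U(3), of phi], of x] unfolding info_lub_def by blast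
  qed
  note L = this
  have S: "\<forall>X. X \<subseteq> UNIV \<and> info_directed comb X \<longrightarrow> (\<exists>s. info_lub comb X s)"
    using all_dir_sup[OF A D U(2)] by blast
  show "s_continuous_ia comb foc e" unfolding s_continuous_ia_def
    apply (rule exI[of _ UNIV])
    apply (intro conjI)
       apply simp
      apply simp
     apply (rule S)
    apply (intro allI)
    by (rule L)
qed

end
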